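(* Let $d\ge3$ and let $\mathbf z_1,\dots,\mathbf z_d\in\mathbb Z^d$ be a basis of $\mathbb Z^d$ with $|\underline{\mathbf z_1}|\leq|\underline{\mathbf z_2}|\leq|\underline{\mathbf z_3}|$ and $\langle\underline{\mathbf z_1},\underline{\mathbf z_2}\rangle\leq0$. If $d\geq4$, assume moreover $\det\underline\Lambda_{1,n}>|\underline{\mathbf z_2}|\det\underline\Lambda_{1,n-1}$ for $n=3,\dots,d-1$. Suppose $\boldsymbol\alpha\in\mathfrak S_2$ satisfies $\langle\boldsymbol\alpha,\mathbf z_2\rangle\cdot\langle\boldsymbol\alpha_2,\mathbf z_1\rangle\geq0$. Let $\mathbf z\in\Lambda_{1,d-1}$ with $|\underline{\mathbf z}|\leq|\underline{\mathbf z_2}|$ and $\mathbf z\neq\mathbf 0,\pm\mathbf z_2$. Then (i) $|L_{\boldsymbol\alpha}(\mathbf z)|\geq|L_{\boldsymbol\alpha}(\mathbf z_1)|$; (ii) if $\mathbf z$ is not a multiple of $\mathbf z_1$, then \[|L_{\boldsymbol\alpha}(\mathbf z)|\cdot|\underline{\mathbf z}|^{d-1}\geq\frac{D_{1,2}^{d-1}}{D_{2,d-1}B_1^{d-1}}\Big(1-\frac{1}{2B_1B_2}\Big).\]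
   Context: $|\cdot|$ is the Euclidean norm, $\langle\cdot,\cdot\rangle$ the standard inner product. For $\mathbf x=(x_1,\dots,x_d)\in\mathbb R^d$ write $\underline{\mathbf x}=(x_1,\dots,x_{d-1})$. Let $\pi_d=\{\mathbf x\in\mathbb R^d:x_d=1\}$ and $L_{\boldsymbol\alpha}(\mathbf x)=\langle\boldsymbol\alpha,\mathbf x\rangle$ for $\boldsymbol\alpha\in\pi_d$. For given vectors $\mathbf z_1,\mathbf z_2,\dots$: $\Lambda_{k,l}$ is the $\mathbb Z$-span of $\mathbf z_k,\dots,\mathbf z_{k+l-1}$; $\det\underline\Lambda_{k,l}=|\underline{\mathbf z_k}\wedge\dots\wedge\underline{\mathbf z_{k+l-1}}|$ ($1\le l\le d-1$); $D_{k,l}=\det\underline\Lambda_{k,l}/|\underline{\mathbf z_k}|^l$; $B_k=|\underline{\mathbf z_{k+1}}|/|\underline{\mathbf z_k}|$; $R_k=1/(2|\underline{\mathbf z_{k+1}}|\det\underline\Lambda_{k,d-1})$; when $\underline{\mathbf z_k},\dots,\underline{\mathbf z_{k+d-2}}$ are linearly independent, $\boldsymbol\alpha_k$ is the unique point of $\pi_d$ orthogonal to $\mathbf z_k,\dots,\mathbf z_{k+d-2}$ and $\mathfrak S_k=\{\mathbf x\in\pi_d:|\mathbf x-\boldsymbol\alpha_k|\le R_k\}$; whenever $\boldsymbol\alpha_k$ or $\mathfrak S_k$ appears it is implicitly assumed well defined. *)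

theory Defs
  imports Complex_Main "Jordan_Normal_Form.Determinant"
begin

text \<open>Vectors of R^d / Z^d are represented as functions on nat with coordinates
  1..d (value 0 outside {1..d}). The family z_1, z_2, ... is z :: nat => nat => int,
  z k being the k-th vector. The underlined vector keeps coordinates 1..d-1.\<close>

definition vsupp :: "nat \<Rightarrow> (nat \<Rightarrow> 'a::zero) \<Rightarrow> bool" where
  "vsupp d x \<longleftrightarrow> (\<forall>i. i \<notin> {1..d} \<longrightarrow> x i = 0)"

definition rv :: "(nat \<Rightarrow> int) \<Rightarrow> nat \<Rightarrow> real" where
  "rv x = (\<lambda>i. real_of_int (x i))"

definition ip :: "nat \<Rightarrow> (nat \<Rightarrow> real) \<Rightarrow> (nat \<Rightarrow> real) \<Rightarrow> real" where
  "ip d x y = (\<Sum>i=1..d. x i * y i)"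

definition enorm :: "nat \<Rightarrow> (nat \<Rightarrow> real) \<Rightarrow> real" where
  "enorm d x = sqrt (ip d x x)"

definition unorm :: "nat \<Rightarrow> (nat \<Rightarrow> int) \<Rightarrow> real" where
  "unorm d x = enorm (d - 1) (rv x)"

definition Lf :: "nat \<Rightarrow> (nat \<Rightarrow> real) \<Rightarrow> (nat \<Rightarrow> int) \<Rightarrow> real" where
  "Lf d a x = ip d a (rv x)"

definition int_basis :: "nat \<Rightarrow> (nat \<Rightarrow> nat \<Rightarrow> int) \<Rightarrow> bool" where
  "int_basis d z \<longleftrightarrow>
     (\<forall>k\<in>{1..d}. vsupp d (z k)) \<and>
     (\<forall>v. vsupp d v \<longrightarrow> (\<exists>c. v = (\<lambda>j. \<Sum>i=1..d. c i * z i j))) \<and>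
     (\<forall>c. (\<lambda>j. \<Sum>i=1..d. c i * z i j) = (\<lambda>_. 0) \<longrightarrow> (\<forall>i\<in>{1..d}. c i = 0))"

definition Lam :: "(nat \<Rightarrow> nat \<Rightarrow> int) \<Rightarrow> nat \<Rightarrow> nat \<Rightarrow> (nat \<Rightarrow> int) set" where
  "Lam z k l = {(\<lambda>j. \<Sum>i=k..<k+l. c i * z i j) | c. True}"

text \<open>det underline Lambda_{k,l} = |z_k_ wedge ... wedge z_{k+l-1}_| = sqrt of the Gram determinant\<close>
definition detUL :: "nat \<Rightarrow> (nat \<Rightarrow> nat \<Rightarrow> int) \<Rightarrow> nat \<Rightarrow> nat \<Rightarrow> real" where
  "detUL d z k l = sqrt (det (mat l l (\<lambda>(i,j). ip (d - 1) (rv (z (k+i))) (rv (z (k+j))))))"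

definition Dkl :: "nat \<Rightarrow> (nat \<Rightarrow> nat \<Rightarrow> int) \<Rightarrow> nat \<Rightarrow> nat \<Rightarrow> real" where
  "Dkl d z k l = detUL d z k l / unorm d (z k) ^ l"

definition Bk :: "nat \<Rightarrow> (nat \<Rightarrow> nat \<Rightarrow> int) \<Rightarrow> nat \<Rightarrow> real" where
  "Bk d z k = unorm d (z (k+1)) / unorm d (z k)"

definition Rk :: "nat \<Rightarrow> (nat \<Rightarrow> nat \<Rightarrow> int) \<Rightarrow> nat \<Rightarrow> real" where
  "Rk d z k = 1 / (2 * unorm d (z (k+1)) * detUL d z k (d - 1))"

definition ul_indep :: "nat \<Rightarrow> (nat \<Rightarrow> nat \<Rightarrow> int) \<Rightarrow> nat \<Rightarrow> bool" where
  "ul_indep d z k \<longleftrightarrow>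
     (\<forall>c::nat \<Rightarrow> real. (\<forall>j\<in>{1..d-1}. (\<Sum>i=k..k+d-2. c i * real_of_int (z i j)) = 0)
        \<longrightarrow> (\<forall>i\<in>{k..k+d-2}. c i = 0))"

definition pid :: "nat \<Rightarrow> (nat \<Rightarrow> real) set" where
  "pid d = {x. vsupp d x \<and> x d = 1}"

definition alphak :: "nat \<Rightarrow> (nat \<Rightarrow> nat \<Rightarrow> int) \<Rightarrow> nat \<Rightarrow> nat \<Rightarrow> real" where
  "alphak d z k = (THE a. a \<in> pid d \<and> (\<forall>i\<in>{k..k+d-2}. ip d a (rv (z i)) = 0))"

definition Sk :: "nat \<Rightarrow> (nat \<Rightarrow> nat \<Rightarrow> int) \<Rightarrow> nat \<Rightarrow> (nat \<Rightarrow> real) set" where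
  "Sk d z k = {x \<in> pid d. enorm d (\<lambda>i. x i - alphak d z k i) \<le> Rk d z k}"

end

theory Submission imports Defs begin

lemma ip_shift: "ip n x y = (\<Sum>j<n. x (Suc j) * y (Suc j))"
  unfolding ip_def by (simp add: sum.atLeast1_atMost_eq)

lemma ip_sym: "ip n x y = ip n y x"
  unfolding ip_def by (simp add: mult.commute)

lemma ip_sum_left: "ip n (\<lambda>j. \<Sum>l\<in>S. c l * V l j) y = (\<Sum>l\<in>S. c l * ip n (V l) y)"
  unfolding ip_def by (simp add: sum_distrib_left sum_distrib_right mult.assoc sum.swap[of _ S])

lemma ip_sum_right: "ip n y (\<lambda>j. \<Sum>l\<in>S. c l * V l j) = (\<Sum>l\<in>S. c l * ip n y (V l))"
  using ip_sum_left[of n c V S y] by (simp add: ip_sym)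

lemma ip_diff_left: "ip n (\<lambda>j. x j - y j) w = ip n x w - ip n y w"
  unfolding ip_def by (simp add: left_diff_distrib sum_subtractf)

lemma ip_diff_right: "ip n w (\<lambda>j. x j - y j) = ip n w x - ip n w y"
  using ip_diff_left[of n x y w] by (simp add: ip_sym)

lemma ip_add_left: "ip n (\<lambda>j. x j + y j) w = ip n x w + ip n y w"
  unfolding ip_def by (simp add: distrib_right sum.distrib)

lemma ip_add_right: "ip n w (\<lambda>j. x j + y j) = ip n w x + ip n w y"
  using ip_add_left[of n x y w] by (simp add: ip_sym)

lemma ip_self_nonneg: "0 \<le> ip n x x"
  unfolding ip_def by (auto intro: sum_nonneg)

lemma ip_self_zero: "ip n x x = 0 \<Longrightarrow> j \<in> {1..n} \<Longrightarrow> x j = 0"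
  unfolding ip_def by (subst (asm) sum_nonneg_eq_0_iff) auto

lemma smult_one_mat_vec: "(b::'a::comm_ring_1 vec) \<in> carrier_vec k \<Longrightarrow> (a \<cdot>\<^sub>m 1\<^sub>m k) *\<^sub>v b = a \<cdot>\<^sub>v b"
proof (intro eq_vecI)
  fix i assume i: "b \<in> carrier_vec k" "i < dim_vec (a \<cdot>\<^sub>v b)"
  have "(\<Sum>ia = 0..<k. a * (if i = ia then 1 else 0) * b $ ia) = (\<Sum>ia = 0..<k. if ia = i then a * b $ i else 0)"
    by (intro sum.cong) auto
  thus "((a \<cdot>\<^sub>m 1\<^sub>m k) *\<^sub>v b) $ i = (a \<cdot>\<^sub>v b) $ i" using i
    by (auto simp: scalar_prod_def one_mat_def row_def if_distrib[of "\<lambda>f. f x" for x] cong: if_cong)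
qed auto

definition gram :: "nat \<Rightarrow> (nat \<Rightarrow> nat \<Rightarrow> real) \<Rightarrow> nat \<Rightarrow> real mat" where
  "gram n V k = mat k k (\<lambda>(i,j). ip n (V i) (V j))"

definition vm :: "nat \<Rightarrow> (nat \<Rightarrow> nat \<Rightarrow> real) \<Rightarrow> nat \<Rightarrow> real mat" where
  "vm n V k = mat k n (\<lambda>(i,j). V i (Suc j))"

lemma gram_carrier[simp]: "gram n V k \<in> carrier_mat k k"
  unfolding gram_def by simp

lemma gram_vm: "gram n V k = vm n V k * transpose_mat (vm n V k)"
  by (rule eq_matI) (auto simp: gram_def vm_def scalar_prod_def ip_shift intro!: sum.cong)

lemma gram_transform:
  assumes E: "E \<in> carrier_mat k k"
    and W: "\<And>i. i < k \<Longrightarrow> W i = (\<lambda>j. \<Sum>l<k. E $$ (i,l) * V l j)"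
  shows "det (gram n W k) = (det E)^2 * det (gram n V k)"
proof -
  have vmW: "vm n W k = E * vm n V k"
    using E by (intro eq_matI) (auto simp: vm_def W scalar_prod_def intro!: sum.cong)
  have c1: "vm n V k \<in> carrier_mat k n" by (simp add: vm_def)
  have "gram n W k = E * (vm n V k * transpose_mat (vm n V k)) * transpose_mat E"
  proof -
    let ?M = "vm n V k"
    have t: "transpose_mat ?M \<in> carrier_mat n k" "transpose_mat E \<in> carrier_mat k k" using E c1 by auto
    have "gram n W k = (E * ?M) * (transpose_mat ?M * transpose_mat E)"
      unfolding gram_vm vmW by (simp add: transpose_mult[OF E c1])
    also have "\<dots> = E * (?M * (transpose_mat ?M * transpose_mat E))"
      by (rule assoc_mult_mat[OF E c1]) (use t in auto)
    also have "?M * (transpose_mat ?M * transpose_mat E) = (?M * transpose_mat ?M) * transpose_mat E"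
      by (rule assoc_mult_mat[symmetric, OF c1 t])
    also have "E * ((?M * transpose_mat ?M) * transpose_mat E) = E * (?M * transpose_mat ?M) * transpose_mat E"
      by (rule assoc_mult_mat[symmetric, OF E]) (use t c1 in auto)
    finally show ?thesis .
  qed
  also have "det \<dots> = det E * det (gram n V k) * det E"
    using E c1 by (simp add: det_mult[of _ k] det_transpose gram_vm[symmetric])
  finally show ?thesis by (simp add: power2_eq_square)
qed

lemma gram_cong: "(\<And>i. i < k \<Longrightarrow> V i = W i) \<Longrightarrow> gram n V k = gram n W k"
  unfolding gram_def by (intro eq_matI) auto

lemma gram_step:
  assumes G0: "0 \<le> det (gram n V k)"
  shows "0 \<le> det (gram n V (Suc k)) \<and> det (gram n V (Suc k)) \<le> det (gram n V k) * ip n (V k) (V k)"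
proof (cases "det (gram n V k) = 0")
  case True
  let ?G = "gram n V k"
  obtain t where t: "t \<in> carrier_vec k" "t \<noteq> 0\<^sub>v k" "?G *\<^sub>v t = 0\<^sub>v k"
    using True det_0_iff_vec_prod_zero_field[OF gram_carrier[of n V k]] by auto
  define u where "u = (\<lambda>j. \<Sum>l<k. t $ l * V l j)"
  have Gt: "(\<Sum>m<k. t $ m * ip n (V l) (V m)) = 0" if "l < k" for l
  proof -
    have "(?G *\<^sub>v t) $ l = 0" using t that by simp
    thus ?thesis using t(1) that by (simp add: gram_def scalar_prod_def lessThan_atLeast0 mult.commute)
  qed
  have "ip n u u = (\<Sum>l<k. t $ l * (\<Sum>m<k. t $ m * ip n (V l) (V m)))"
    unfolding u_def ip_sum_left ip_sum_right ..
  also have "\<dots> = 0" using Gt by simp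
  finally have uu: "ip n u u = 0" .
  have iu: "ip n (V i) u = 0" for i
  proof -
    have "ip n (V i) u = ip n (V i) (\<lambda>_. 0)"
      unfolding ip_def by (intro sum.cong refl) (use ip_self_zero[OF uu] in auto)
    thus ?thesis by (simp add: ip_def)
  qed
  define t' where "t' = vec (Suc k) (\<lambda>i. if i < k then t $ i else 0)"
  have t'c: "t' \<in> carrier_vec (Suc k)" by (simp add: t'_def)
  have t'0: "t' \<noteq> 0\<^sub>v (Suc k)"
  proof
    assume "t' = 0\<^sub>v (Suc k)"
    have "t $ i = 0" if "i < k" for i
    proof -
      have "t' $ i = 0\<^sub>v (Suc k) $ i" using \<open>t' = 0\<^sub>v (Suc k)\<close> by simp
      thus ?thesis using that by (simp add: t'_def)
    qed
    hence "t = 0\<^sub>v k" using t(1) by (intro eq_vecI) auto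
    thus False using t(2) by simp
  qed
  have "gram n V (Suc k) *\<^sub>v t' = 0\<^sub>v (Suc k)"
  proof (rule eq_vecI)
    fix i assume i: "i < dim_vec (0\<^sub>v (Suc k))"
    have "(gram n V (Suc k) *\<^sub>v t') $ i = (\<Sum>l<Suc k. ip n (V i) (V l) * t' $ l)"
      using i by (simp add: gram_def scalar_prod_def t'_def lessThan_atLeast0)
    also have "\<dots> = (\<Sum>l<k. t $ l * ip n (V i) (V l))"
      by (simp add: t'_def mult.commute)
    also have "\<dots> = ip n (V i) u" unfolding u_def ip_sum_right ..
    finally show "(gram n V (Suc k) *\<^sub>v t') $ i = 0\<^sub>v (Suc k) $ i" using iu i by simp
  qed (simp add: gram_def)
  hence "det (gram n V (Suc k)) = 0"
    using det_0_iff_vec_prod_zero_field[OF gram_carrier[of n V "Suc k"]] t'c t'0 by auto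
  thus ?thesis using True by simp
next
  case False
  let ?G = "gram n V k"
  define b where "b = vec k (\<lambda>i. ip n (V i) (V k))"
  define t where "t = (1 / det ?G) \<cdot>\<^sub>v (adj_mat ?G *\<^sub>v b)"
  have bc: "b \<in> carrier_vec k" by (simp add: b_def)
  have Gt: "?G *\<^sub>v t = b"
  proof -
    have "?G *\<^sub>v t = (1 / det ?G) \<cdot>\<^sub>v (?G *\<^sub>v (adj_mat ?G *\<^sub>v b))"
      unfolding t_def using adj_mat(1)[OF gram_carrier[of n V k]] bc
      by (intro mult_mat_vec[of _ k k]) auto
    also have "?G *\<^sub>v (adj_mat ?G *\<^sub>v b) = (?G * adj_mat ?G) *\<^sub>v b"
      using adj_mat(1)[OF gram_carrier[of n V k]] bc by (simp add: assoc_mult_mat_vec[of _ k k _ k])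
    also have "\<dots> = det ?G \<cdot>\<^sub>v b" using adj_mat(2)[OF gram_carrier[of n V k]] bc by (simp add: smult_one_mat_vec)
    finally show ?thesis using False by (simp add: smult_smult_assoc)
  qed
  have tc: "t \<in> carrier_vec k" using adj_mat(1)[OF gram_carrier[of n V k]] bc by (simp add: t_def)
  define p where "p = (\<lambda>j. \<Sum>l<k. t $ l * V l j)"
  define q where "q = (\<lambda>j. V k j - p j)"
  have iq: "ip n (V i) q = 0" if "i < k" for i
  proof -
    have "(?G *\<^sub>v t) $ i = b $ i" using Gt by simp
    hence "(\<Sum>l<k. ip n (V i) (V l) * t $ l) = ip n (V i) (V k)"
      using that tc by (simp add: gram_def scalar_prod_def b_def lessThan_atLeast0)
    thus ?thesis unfolding q_def ip_diff_right p_def ip_sum_right by (simp add: mult.commute)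
  qed
  define W where "W = V(k := q)"
  define E where "E = mat (Suc k) (Suc k) (\<lambda>(i,j). if i = k then (if j = k then 1 else - t $ j) else (if i = j then 1 else (0::real)))"
  have Ec: "E \<in> carrier_mat (Suc k) (Suc k)" by (simp add: E_def)
  have detE: "det E = 1"
  proof -
    have "det E = prod_list (diag_mat E)"
      by (rule det_lower_triangular[OF _ Ec]) (auto simp: E_def)
    also have "diag_mat E = map (\<lambda>_. 1) [0..<Suc k]"
      by (auto simp: diag_mat_def E_def)
    finally show ?thesis by (simp add: map_replicate_const)
  qed
  have WE: "W i = (\<lambda>j. \<Sum>l<Suc k. E $$ (i,l) * V l j)" if "i < Suc k" for i
  proof (cases "i = k")
    case True
    show ?thesis
    proof
      fix j
      have "(\<Sum>l<Suc k. E $$ (i,l) * V l j) = V k j + (\<Sum>l<k. - t $ l * V l j)"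
        using True by (simp add: E_def)
      thus "W i j = (\<Sum>l<Suc k. E $$ (i,l) * V l j)"
        using True by (simp add: W_def q_def p_def sum_negf)
    qed
  next
    case False
    hence ik: "i < k" using that by simp
    show ?thesis
    proof
      fix j
      have "(\<Sum>l<Suc k. E $$ (i,l) * V l j) = (\<Sum>l<Suc k. (if l = i then V l j else 0))"
        using ik by (intro sum.cong refl) (auto simp: E_def)
      also have "\<dots> = V i j" using ik by simp
      finally show "W i j = (\<Sum>l<Suc k. E $$ (i,l) * V l j)" using ik by (simp add: W_def)
    qed
  qed
  have eqd: "det (gram n W (Suc k)) = det (gram n V (Suc k))"
    using gram_transform[OF Ec WE] detE by simp
  have "det (gram n W (Suc k)) = (\<Sum>j<Suc k. gram n W (Suc k) $$ (k,j) * cofactor (gram n W (Suc k)) k j)"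
    by (rule laplace_expansion_row[OF gram_carrier]) simp
  also have "\<dots> = ip n q q * cofactor (gram n W (Suc k)) k k"
  proof -
    have "gram n W (Suc k) $$ (k,j) = 0" if "j < k" for j
      using that iq[of j] by (simp add: gram_def W_def ip_sym)
    hence "(\<Sum>j<Suc k. gram n W (Suc k) $$ (k,j) * cofactor (gram n W (Suc k)) k j)
       = gram n W (Suc k) $$ (k,k) * cofactor (gram n W (Suc k)) k k"
      by (simp add: lessThan_Suc)
    thus ?thesis by (simp add: gram_def W_def)
  qed
  also have "cofactor (gram n W (Suc k)) k k = det ?G"
  proof -
    have "mat_delete (gram n W (Suc k)) k k = ?G"
      by (intro eq_matI) (auto simp: mat_delete_def gram_def W_def)
    thus ?thesis by (simp add: cofactor_def)
  qed
  finally have dq: "det (gram n V (Suc k)) = ip n q q * det ?G" using eqd by simp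
  have pq: "ip n p q = 0" unfolding p_def ip_sum_left using iq by simp
  have "ip n (V k) (V k) = ip n (\<lambda>j. p j + q j) (\<lambda>j. p j + q j)"
    by (simp add: q_def)
  also have "\<dots> = ip n p p + ip n q q" 
    unfolding ip_add_left ip_add_right using pq by (simp add: ip_sym[of n q p])
  finally have "ip n q q \<le> ip n (V k) (V k)" using ip_self_nonneg[of n p] by simp
  moreover have "0 < det ?G" using G0 False by simp
  ultimately show ?thesis using dq ip_self_nonneg[of n q]
    by (simp add: mult_right_mono mult.commute)
qed

lemma gram_nonneg: "0 \<le> det (gram n V k)"
proof (induction k)
  case 0 thus ?case by (simp add: gram_def)
next
  case (Suc k) thus ?case using gram_step by blast
qed

lemma arith_core:
  fixes u1 u2 u3 s lam De e1 e2 nw G :: real and c1 c2 :: int and m :: nat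
  assumes u: "0 < u1" "u1 \<le> u2" "u2 \<le> u3" and s: "s \<le> 0" and De: "0 < De"
    and lam: "1 \<le> \<bar>lam\<bar> * De" and e1: "\<bar>e1\<bar> \<le> u1 / (2 * u3 * De)" and e2: "0 \<le> e2 * lam"
    and nw: "nw\<^sup>2 = (real_of_int c1)\<^sup>2 * u1\<^sup>2 + (real_of_int c2)\<^sup>2 * u2\<^sup>2 + 2 * real_of_int c1 * real_of_int c2 * s" "0 \<le> nw" "nw \<le> u2"
    and c: "\<not> (c1 = 0 \<and> c2 = 0)" "\<not> (c1 = 0 \<and> c2 = 1)" "\<not> (c1 = 0 \<and> c2 = -1)"
    and G: "G = u1\<^sup>2 * u2\<^sup>2 - s\<^sup>2" and G0: "0 \<le> G"
  shows "\<bar>c1 * (lam + e1) + c2 * e2\<bar> \<ge> \<bar>lam + e1\<bar> \<and>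
    (c2 \<noteq> 0 \<longrightarrow> \<bar>c1 * (lam + e1) + c2 * e2\<bar> * nw ^ m \<ge>
      (sqrt G / u1\<^sup>2) ^ m / ((De / u2 ^ m) * (u2 / u1) ^ m) * (1 - 1 / (2 * (u2 / u1) * (u3 / u2))))"
proof -
  have c1nz: "c1 \<noteq> 0"
  proof
    assume c10: "c1 = 0"
    hence c2: "c2 \<noteq> 0" "c2 \<noteq> 1" "c2 \<noteq> -1" using c by auto
    hence "c2\<^sup>2 \<ge> 4"
    proof -
      have "\<bar>c2\<bar> \<ge> 2" using c2 by linarith
      hence "\<bar>c2\<bar>\<^sup>2 \<ge> 2\<^sup>2" by (intro power_mono) auto
      thus ?thesis by simp
    qed
    hence "real_of_int (c2\<^sup>2) \<ge> 4" by linarith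
    hence "nw\<^sup>2 \<ge> 4 * u2\<^sup>2" using nw(1) c10 by (simp add: mult_right_mono)
    moreover have "nw\<^sup>2 \<le> u2\<^sup>2" using nw by (intro power_mono) auto
    moreover have "u2\<^sup>2 > 0" using u by simp
    ultimately show False by linarith
  qed
  have cc: "0 \<le> c1 * c2"
  proof (rule ccontr)
    assume "\<not> 0 \<le> c1 * c2"
    hence "c1 * c2 < 0" by simp
    hence "real_of_int (c1 * c2) < 0" by linarith
    hence "real_of_int c1 * c2 \<le> 0" by simp
    hence "real_of_int c1 * c2 * s \<ge> 0" using s by (simp add: mult_nonpos_nonpos)
    have q1: "(real_of_int c1)\<^sup>2 \<ge> 1" using c1nz
      by (metis of_int_1_le_iff of_int_power power2_less_eq_zero_iff zero_less_power2 int_one_le_iff_zero_less)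
    have "c2 \<noteq> 0" using \<open>c1 * c2 < 0\<close> by auto
    hence q2: "(real_of_int c2)\<^sup>2 \<ge> 1"
      by (metis of_int_1_le_iff of_int_power power2_less_eq_zero_iff zero_less_power2 int_one_le_iff_zero_less)
    have "(real_of_int c1)\<^sup>2 * u1\<^sup>2 \<ge> 1 * u1\<^sup>2" using q1 by (intro mult_right_mono) auto
    moreover have "(real_of_int c2)\<^sup>2 * u2\<^sup>2 \<ge> 1 * u2\<^sup>2" using q2 by (intro mult_right_mono) auto
    ultimately have "nw\<^sup>2 \<ge> u1\<^sup>2 + u2\<^sup>2" using nw(1) \<open>real_of_int c1 * c2 * s \<ge> 0\<close> by linarith
    moreover have "nw\<^sup>2 \<le> u2\<^sup>2" using nw by (intro power_mono) auto
    moreover have "u1\<^sup>2 > 0" using u by simp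
    ultimately show False by linarith
  qed
  have R: "u1 / (2 * u3 * De) \<le> 1 / (2 * De)" using u De by (simp add: field_simps)
  have L1: "\<bar>lam + e1\<bar> \<ge> (1 / De) * (1 - u1 / (2 * u3))"
  proof -
    have "\<bar>lam\<bar> \<ge> 1 / De" using lam De by (simp add: field_simps)
    moreover have "(1 / De) * (1 - u1 / (2 * u3)) = 1/De - u1 / (2 * u3 * De)" using u De by (simp add: field_simps)
    ultimately show ?thesis using e1 by linarith
  qed
  have pos: "(1 / De) * (1 - u1 / (2 * u3)) > 0"
    using u De by (simp add: field_simps)
  have main: "\<bar>c1 * (lam + e1) + c2 * e2\<bar> \<ge> \<bar>c1\<bar> * \<bar>lam + e1\<bar>"
  proof -
    have sgn: "lam * (lam + e1) > 0"
    proof -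
      have "1 / De \<le> \<bar>lam\<bar>" using lam De by (simp add: field_simps)
      moreover have "1 / (2 * De) < 1 / De" using De by (simp add: field_simps)
      ultimately have "\<bar>e1\<bar> < \<bar>lam\<bar>" using e1 R by linarith
      thus ?thesis
        by (cases "lam \<ge> 0") (auto intro: mult_pos_pos mult_neg_neg)
    qed
    consider "lam > 0" "c1 > 0" | "lam > 0" "c1 < 0" | "lam < 0" "c1 > 0" | "lam < 0" "c1 < 0"
      using c1nz sgn by (metis linorder_neqE_linordered_idom mult_zero_left less_irrefl)
    thus ?thesis
    proof cases
      case 1
      hence "e2 \<ge> 0" "lam + e1 > 0" "c2 \<ge> 0" using e2 sgn cc
        by (auto simp: zero_le_mult_iff zero_less_mult_iff)
      hence "real_of_int c2 * e2 \<ge> 0" "real_of_int c1 * (lam + e1) \<ge> 0" using 1 by auto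
      thus ?thesis using 1 \<open>lam + e1 > 0\<close> by (simp add: abs_mult)
    next
      case 2
      hence "e2 \<ge> 0" "lam + e1 > 0" "c2 \<le> 0" using e2 sgn cc
        by (auto simp: zero_le_mult_iff zero_less_mult_iff)
      hence "real_of_int c2 * e2 \<le> 0" "real_of_int c1 * (lam + e1) \<le> 0" using 2
        by (auto intro: mult_nonpos_nonneg)
      moreover have "\<bar>real_of_int c1\<bar> * \<bar>lam + e1\<bar> = - (real_of_int c1 * (lam + e1))"
        using 2 \<open>lam + e1 > 0\<close> by simp
      ultimately show ?thesis by linarith
    next
      case 3
      hence "e2 \<le> 0" "lam + e1 < 0" "c2 \<ge> 0" using e2 sgn cc
        by (auto simp: zero_le_mult_iff zero_less_mult_iff)
      hence "real_of_int c2 * e2 \<le> 0" "real_of_int c1 * (lam + e1) \<le> 0" using 3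
        by (auto intro: mult_nonneg_nonpos)
      moreover have "\<bar>real_of_int c1\<bar> * \<bar>lam + e1\<bar> = - (real_of_int c1 * (lam + e1))"
        using 3 \<open>lam + e1 < 0\<close> by (simp add: algebra_simps)
      ultimately show ?thesis by linarith
    next
      case 4
      hence "e2 \<le> 0" "lam + e1 < 0" "c2 \<le> 0" using e2 sgn cc
        by (auto simp: zero_le_mult_iff zero_less_mult_iff)
      hence "real_of_int c2 * e2 \<ge> 0" "real_of_int c1 * (lam + e1) \<ge> 0" using 4
        by (auto intro: mult_nonpos_nonpos)
      moreover have "\<bar>real_of_int c1\<bar> * \<bar>lam + e1\<bar> = real_of_int c1 * (lam + e1)"
        using 4 \<open>lam + e1 < 0\<close> by (simp add: algebra_simps)
      ultimately show ?thesis by linarith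
    qed
  qed
  have c1abs: "\<bar>real_of_int c1\<bar> \<ge> 1" using c1nz by linarith
  have part1: "\<bar>c1 * (lam + e1) + c2 * e2\<bar> \<ge> \<bar>lam + e1\<bar>"
    using main mult_right_mono[OF c1abs abs_ge_zero[of "lam + e1"]] by (simp add: of_int_abs)
  moreover have "\<bar>c1 * (lam + e1) + c2 * e2\<bar> * nw ^ m \<ge>
      (sqrt G / u1\<^sup>2) ^ m / ((De / u2 ^ m) * (u2 / u1) ^ m) * (1 - 1 / (2 * (u2 / u1) * (u3 / u2)))"
    if c2: "c2 \<noteq> 0"
  proof -
    have "nw\<^sup>2 * u1\<^sup>2 - (real_of_int c2)\<^sup>2 * G = (c1 * u1\<^sup>2 + c2 * s)\<^sup>2"
      unfolding nw(1) G by (simp add: power2_eq_square algebra_simps)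
    hence "nw\<^sup>2 * u1\<^sup>2 \<ge> (real_of_int c2)\<^sup>2 * G" using zero_le_power2[of "c1 * u1\<^sup>2 + c2 * s"] by linarith
    moreover have "(real_of_int c2)\<^sup>2 \<ge> 1" using c2
      by (metis of_int_1_le_iff of_int_power power2_less_eq_zero_iff zero_less_power2 int_one_le_iff_zero_less)
    hence "(real_of_int c2)\<^sup>2 * G \<ge> 1 * G" using G0 by (intro mult_right_mono) auto
    ultimately have "nw\<^sup>2 * u1\<^sup>2 \<ge> G" by linarith
    hence "sqrt G \<le> sqrt ((nw * u1)\<^sup>2)" by (simp add: power_mult_distrib)
    hence hn: "sqrt G / u1 \<le> nw" using u nw by (simp add: divide_le_eq mult.commute)
    have eq: "(sqrt G / u1\<^sup>2) ^ m / ((De / u2 ^ m) * (u2 / u1) ^ m) * (1 - 1 / (2 * (u2 / u1) * (u3 / u2)))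
       = (sqrt G / u1) ^ m * ((1 / De) * (1 - u1 / (2 * u3)))"
    proof -
      have h1: "1 / (2 * (u2 / u1) * (u3 / u2)) = u1 / (2 * u3)" using u by (simp add: field_simps)
      have a1: "(sqrt G / u1\<^sup>2) ^ m = (sqrt G / u1) ^ m / u1 ^ m"
        by (simp add: power_divide power2_eq_square power_mult_distrib)
      have a2: "(De / u2 ^ m) * (u2 / u1) ^ m = De / u1 ^ m"
        using u by (simp add: power_divide)
      have a3: "((sqrt G / u1) ^ m / u1 ^ m) / (De / u1 ^ m) = (sqrt G / u1) ^ m / De"
        using u by simp
      show ?thesis unfolding h1 a1 a2 a3 by simp
    qed
    have "(sqrt G / u1) ^ m * ((1 / De) * (1 - u1 / (2 * u3))) \<le> nw ^ m * \<bar>lam + e1\<bar>"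
      using hn L1 pos G0 u nw(2) by (intro mult_mono power_mono) auto
    also have "\<dots> \<le> nw ^ m * \<bar>c1 * (lam + e1) + c2 * e2\<bar>"
      using part1 nw by (intro mult_left_mono) auto
    finally show ?thesis using eq by (simp add: mult.commute)
  qed
  ultimately show ?thesis by blast
qed

lemma det2: "det (mat 2 2 f) = f(0,0)*f(1,1) - f(0,1)*(f(1,0)::'a::comm_ring_1)"
  apply (subst laplace_expansion_row[of _ 2 0]) apply auto
  apply (simp add: numeral_2_eq_2 cofactor_def mat_delete_def det_single)
  done

lemma ip_cs: "(ip n x y)\<^sup>2 \<le> ip n x x * ip n y y"
proof -
  have "0 \<le> det (gram n (\<lambda>i. if i = 0 then x else y) 2)" by (rule gram_nonneg)
  thus ?thesis by (simp add: gram_def det2 power2_eq_square ip_sym[of n y x])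
qed

lemma ip_cs_abs: "\<bar>ip n x y\<bar> \<le> enorm n x * enorm n y"
proof -
  have "\<bar>ip n x y\<bar> = sqrt ((ip n x y)\<^sup>2)" by simp
  also have "\<dots> \<le> sqrt (ip n x x * ip n y y)" using ip_cs by (rule real_sqrt_le_mono)
  finally show ?thesis by (simp add: enorm_def real_sqrt_mult)
qed

lemma enorm_nonneg: "0 \<le> enorm n x"
  unfolding enorm_def using ip_self_nonneg by simp

lemma unorm_nonneg: "0 \<le> unorm d x"
  unfolding unorm_def by (rule enorm_nonneg)

lemma unorm_sq: "(unorm d x)\<^sup>2 = ip (d - 1) (rv x) (rv x)"
  unfolding unorm_def enorm_def using ip_self_nonneg by simp

lemma ip_last: "1 \<le> d \<Longrightarrow> ip d x y = ip (d - 1) x y + x d * y d"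
  by (cases d) (auto simp: ip_def)

lemma eps_bound:
  assumes "a \<in> pid d" "b \<in> pid d" "1 \<le> d"
  shows "\<bar>Lf d a x - Lf d b x\<bar> \<le> enorm d (\<lambda>i. a i - b i) * unorm d x"
proof -
  let ?e = "\<lambda>i. a i - b i"
  have ed: "?e d = 0" using assms by (simp add: pid_def)
  have "Lf d a x - Lf d b x = ip d ?e (rv x)" unfolding Lf_def ip_diff_left ..
  also have "\<dots> = ip (d - 1) ?e (rv x)" using ip_last[OF assms(3)] ed by simp
  finally have "\<bar>Lf d a x - Lf d b x\<bar> \<le> enorm (d - 1) ?e * unorm d x"
    using ip_cs_abs unfolding unorm_def by simp
  moreover have "enorm (d - 1) ?e = enorm d ?e"
    unfolding enorm_def using ip_last[OF assms(3), of ?e ?e] ed by simp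
  ultimately show ?thesis by simp
qed

lemma lattice_red:
  assumes d3: "d \<ge> 3"
    and chain: "\<forall>n\<in>{3..d-1}. detUL d z 1 n > unorm d (z 2) * detUL d z 1 (n - 1)"
    and w: "w = (\<lambda>j. \<Sum>i=1..<d. c i * z i j)"
    and nrm: "unorm d w \<le> unorm d (z 2)"
  shows "\<forall>i\<in>{3..<d}. c i = 0"
proof (rule ccontr)
  assume nt: "\<not> (\<forall>i\<in>{3..<d}. c i = 0)"
  define S where "S = {i\<in>{3..<d}. c i \<noteq> 0}"
  have Sne: "S \<noteq> {}" "finite S" using nt by (auto simp: S_def)
  define m where "m = Max S"
  have mS: "m \<in> S" using Sne unfolding m_def by (rule Max_in[rotated])
  hence m: "3 \<le> m" "m < d" "c m \<noteq> 0" by (auto simp: S_def)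
  have cz: "c i = 0" if "m < i" "i < d" for i
  proof (rule ccontr)
    assume "c i \<noteq> 0"
    hence "i \<in> S" using that m by (auto simp: S_def)
    hence "i \<le> m" using Sne unfolding m_def by simp
    thus False using that by simp
  qed
  define V where "V = (\<lambda>l. rv (z (1 + l)))"
  define Gf where "Gf = (\<lambda>n. det (gram (d - 1) V n))"
  have dUL: "detUL d z 1 n = sqrt (Gf n)" for n
    unfolding detUL_def Gf_def gram_def V_def by simp
  have Gnn: "0 \<le> Gf n" for n unfolding Gf_def by (rule gram_nonneg)
  have wm: "rv w j = (\<Sum>l<m. real_of_int (c (Suc l)) * V l j)" for j
  proof -
    have "(\<Sum>i=1..<d. c i * z i j) = (\<Sum>i=1..m. c i * z i j) + (\<Sum>i\<in>{m<..<d}. c i * z i j)"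
    proof -
      have "{1..<d} = {1..m} \<union> {m<..<d}" using m by auto
      thus ?thesis by (simp add: sum.union_disjoint[symmetric] ivl_disj_int)
    qed
    also have "(\<Sum>i\<in>{m<..<d}. c i * z i j) = 0" using cz by simp
    finally have "(\<Sum>i=1..<d. c i * z i j) = (\<Sum>l<m. c (Suc l) * z (Suc l) j)"
      by (simp add: sum.atLeast1_atMost_eq)
    thus ?thesis unfolding w rv_def V_def by simp
  qed
  define W where "W = V(m - 1 := rv w)"
  define E where "E = mat m m (\<lambda>(i,l). if i = m - 1 then real_of_int (c (Suc l)) else if i = l then 1 else (0::real))"
  have Ec: "E \<in> carrier_mat m m" by (simp add: E_def)
  have detE: "det E = real_of_int (c m)"
  proof -
    have "det E = prod_list (diag_mat E)"
      by (rule det_lower_triangular[OF _ Ec]) (auto simp: E_def)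
    also have "diag_mat E = map (\<lambda>i. if i = m - 1 then real_of_int (c m) else 1) [0..<m]"
      using m by (auto simp: diag_mat_def E_def)
    also have "prod_list \<dots> = (\<Prod>i\<in>{0..<m}. if i = m - 1 then real_of_int (c m) else 1)"
      using prod.distinct_set_conv_list[of "[0..<m]" "\<lambda>i. if i = m - 1 then real_of_int (c m) else 1"]
      by simp
    also have "\<dots> = real_of_int (c m)" using m by (simp add: prod.delta')
    finally show ?thesis .
  qed
  have WE: "W i = (\<lambda>j. \<Sum>l<m. E $$ (i,l) * V l j)" if "i < m" for i
  proof (cases "i = m - 1")
    case True
    show ?thesis
    proof
      fix j
      have "(\<Sum>l<m. E $$ (i,l) * V l j) = (\<Sum>l<m. real_of_int (c (Suc l)) * V l j)"
        using True by (intro sum.cong) (auto simp: E_def)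
      thus "W i j = (\<Sum>l<m. E $$ (i,l) * V l j)" using True wm by (simp add: W_def)
    qed
  next
    case False
    show ?thesis
    proof
      fix j
      have "(\<Sum>l<m. E $$ (i,l) * V l j) = (\<Sum>l<m. (if l = i then V l j else 0))"
        using False that by (intro sum.cong refl) (auto simp: E_def)
      also have "\<dots> = V i j" using that by simp
      finally show "W i j = (\<Sum>l<m. E $$ (i,l) * V l j)" using False by (simp add: W_def)
    qed
  qed
  have eq1: "det (gram (d - 1) W m) = (real_of_int (c m))\<^sup>2 * Gf m"
    using gram_transform[OF Ec WE] detE unfolding Gf_def by simp
  have gW: "gram (d - 1) W (m - 1) = gram (d - 1) V (m - 1)"
    by (rule gram_cong) (simp add: W_def)
  have st: "det (gram (d - 1) W (Suc (m - 1))) \<le> det (gram (d - 1) W (m - 1)) * ip (d - 1) (W (m - 1)) (W (m - 1))"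
    using gram_step[OF gram_nonneg] by blast
  hence "det (gram (d - 1) W m) \<le> Gf (m - 1) * (unorm d w)\<^sup>2"
    using m gW unfolding Gf_def unorm_sq by (simp add: W_def)
  also have "\<dots> \<le> Gf (m - 1) * (unorm d (z 2))\<^sup>2"
    using nrm unorm_nonneg Gnn by (intro mult_left_mono power_mono) auto
  finally have A: "(real_of_int (c m))\<^sup>2 * Gf m \<le> Gf (m - 1) * (unorm d (z 2))\<^sup>2" using eq1 by simp
  have "(real_of_int (c m))\<^sup>2 \<ge> 1" using m(3)
    by (metis of_int_1_le_iff of_int_power power2_less_eq_zero_iff zero_less_power2 int_one_le_iff_zero_less)
  hence B: "Gf m \<le> (real_of_int (c m))\<^sup>2 * Gf m" using Gnn[of m] mult_right_mono[of 1 _ "Gf m"] by simp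
  have "m \<in> {3..d-1}" using m by auto
  hence "sqrt (Gf m) > unorm d (z 2) * sqrt (Gf (m - 1))" using chain dUL by simp
  hence "(sqrt (Gf m))\<^sup>2 > (unorm d (z 2) * sqrt (Gf (m - 1)))\<^sup>2"
    using unorm_nonneg Gnn by (intro power_strict_mono) auto
  hence "Gf m > (unorm d (z 2))\<^sup>2 * Gf (m - 1)" using Gnn by (simp add: power_mult_distrib)
  thus False using A B by (simp add: mult.commute)
qed


lemma adj_solve:
  assumes N: "(N :: real mat) \<in> carrier_mat n n" and dN: "det N \<noteq> 0" and r: "r \<in> carrier_vec n"
  shows "N *\<^sub>v ((1 / det N) \<cdot>\<^sub>v (adj_mat N *\<^sub>v r)) = r"
    "(1 / det N) \<cdot>\<^sub>v (adj_mat N *\<^sub>v r) \<in> carrier_vec n"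
proof -
  have ac: "adj_mat N *\<^sub>v r \<in> carrier_vec n" by (rule mult_mat_vec_carrier[OF adj_mat(1)[OF N] r])
  have "N *\<^sub>v ((1 / det N) \<cdot>\<^sub>v (adj_mat N *\<^sub>v r)) = (1 / det N) \<cdot>\<^sub>v (N *\<^sub>v (adj_mat N *\<^sub>v r))"
    using ac N by (intro mult_mat_vec[of _ n n]) auto
  also have "N *\<^sub>v (adj_mat N *\<^sub>v r) = (N * adj_mat N) *\<^sub>v r"
    using adj_mat(1)[OF N] r N by (simp add: assoc_mult_mat_vec[of _ n n _ n])
  also have "\<dots> = det N \<cdot>\<^sub>v r" using adj_mat(2)[OF N] r by (simp add: smult_one_mat_vec)
  finally show "N *\<^sub>v ((1 / det N) \<cdot>\<^sub>v (adj_mat N *\<^sub>v r)) = r" using dN by (simp add: smult_smult_assoc)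
  from ac show "(1 / det N) \<cdot>\<^sub>v (adj_mat N *\<^sub>v r) \<in> carrier_vec n" by simp
qed

lemma adj_kernel:
  assumes N: "(N :: real mat) \<in> carrier_mat n n" and dN: "det N \<noteq> 0" and u: "u \<in> carrier_vec n"
    and Nu: "N *\<^sub>v u = 0\<^sub>v n"
  shows "u = 0\<^sub>v n"
proof -
  have "adj_mat N *\<^sub>v (N *\<^sub>v u) = (adj_mat N * N) *\<^sub>v u"
    using adj_mat(1)[OF N] u N by (simp add: assoc_mult_mat_vec[of _ n n _ n])
  also have "\<dots> = det N \<cdot>\<^sub>v u" using adj_mat(3)[OF N] u by (simp add: smult_one_mat_vec)
  moreover have "adj_mat N *\<^sub>v 0\<^sub>v n = 0\<^sub>v n" using adj_mat(1)[OF N] by (intro eq_vecI) auto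
  ultimately have "det N \<cdot>\<^sub>v u = 0\<^sub>v n" using Nu by simp
  hence "(1 / det N) \<cdot>\<^sub>v (det N \<cdot>\<^sub>v u) = (1 / det N) \<cdot>\<^sub>v 0\<^sub>v n" by simp
  also have "\<dots> = 0\<^sub>v n" by (intro eq_vecI) auto
  finally have "(1 / det N) \<cdot>\<^sub>v (det N \<cdot>\<^sub>v u) = 0\<^sub>v n" .
  thus ?thesis using dN by (simp add: smult_smult_assoc)
qed

lemma alpha_facts:
  assumes d3: "d \<ge> 3" and basis: "int_basis d z" and ind: "ul_indep d z 2"
  shows "alphak d z 2 \<in> pid d \<and> (\<forall>i\<in>{2..d}. ip d (alphak d z 2) (rv (z i)) = 0)
    \<and> 0 < detUL d z 2 (d - 1) \<and> 1 \<le> \<bar>Lf d (alphak d z 2) (z 1)\<bar> * detUL d z 2 (d - 1)"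
proof -
  define n where "n = d - 1"
  have nd: "d = Suc n" using d3 by (simp add: n_def)
  define N where "N = mat n n (\<lambda>(i,j). real_of_int (z (2+i) (Suc j)))"
  have Nc: "N \<in> carrier_mat n n" by (simp add: N_def)
  have gN: "gram (d - 1) (\<lambda>i. rv (z (2+i))) n = N * transpose_mat N"
  proof -
    have "vm (d - 1) (\<lambda>i. rv (z (2+i))) n = N" by (simp add: vm_def N_def n_def rv_def)
    thus ?thesis by (simp add: gram_vm)
  qed
  have dUL: "detUL d z 2 (d - 1) = \<bar>det N\<bar>"
  proof -
    have "detUL d z 2 (d - 1) = sqrt (det (gram (d - 1) (\<lambda>i. rv (z (2+i))) n))"
      unfolding detUL_def gram_def n_def by simp
    also have "\<dots> = sqrt (det N * det N)" unfolding gN using Nc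
      by (simp add: det_mult[of _ n] det_transpose)
    finally show ?thesis by simp
  qed
  have dN: "det N \<noteq> 0"
  proof
    assume "det N = 0"
    hence "det (transpose_mat N) = 0" using Nc by (simp add: det_transpose)
    then obtain v where v: "v \<in> carrier_vec n" "v \<noteq> 0\<^sub>v n" "transpose_mat N *\<^sub>v v = 0\<^sub>v n"
      using det_0_iff_vec_prod_zero_field[of "transpose_mat N" n] Nc by auto
    define c where "c = (\<lambda>i. if 2 \<le> i \<and> i \<le> d then v $ (i - 2) else 0)"
    have "\<forall>j\<in>{1..d-1}. (\<Sum>i=2..2+d-2. c i * real_of_int (z i j)) = 0"
    proof
      fix j assume j: "j \<in> {1..d-1}"
      have "(\<Sum>i=2..2+d-2. c i * real_of_int (z i j)) = (\<Sum>l<n. v $ l * real_of_int (z (2+l) j))"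
      proof -
        have "(\<Sum>i=2..2+d-2. c i * real_of_int (z i j)) = (\<Sum>i\<in>(\<lambda>l. l + 2) ` {..<n}. c i * real_of_int (z i j))"
        proof -
          have "(\<lambda>l. l + 2) ` {0..<n} = {0+2..<n+2}" by (simp only: image_add_atLeastLessThan')
          moreover have "{2..2+d-2} = {0+2..<n+2}" using d3 by (auto simp: n_def)
          ultimately show ?thesis by (simp add: lessThan_atLeast0)
        qed
        also have "\<dots> = (\<Sum>l<n. c (l+2) * real_of_int (z (l+2) j))"
          by (subst sum.reindex) (auto simp: inj_on_def)
        also have "\<dots> = (\<Sum>l<n. v $ l * real_of_int (z (2+l) j))"
          by (intro sum.cong refl) (auto simp: c_def n_def add.commute)
        finally show ?thesis .
      qed
      also have "\<dots> = (transpose_mat N *\<^sub>v v) $ (j - 1)"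
        using j v(1) Nc by (auto simp: scalar_prod_def N_def n_def lessThan_atLeast0 mult.commute intro!: sum.cong)
      also have "\<dots> = 0"
      proof -
        have "j - 1 < n" using j d3 by (auto simp: n_def)
        thus ?thesis using v(3) by simp
      qed
      finally show "(\<Sum>i=2..2+d-2. c i * real_of_int (z i j)) = 0" .
    qed
    hence c0: "\<forall>i\<in>{2..2+d-2}. c i = 0" using ind unfolding ul_indep_def by blast
    have "v = 0\<^sub>v n"
    proof (rule eq_vecI)
      fix l assume "l < dim_vec (0\<^sub>v n)"
      hence l: "l < n" by simp
      hence "c (l + 2) = 0" using c0 d3 by (auto simp: n_def)
      moreover have "l + 2 \<le> d" "l + 2 - 2 = l" using l by (auto simp: n_def)
      ultimately show "v $ l = 0\<^sub>v n $ l" using l by (simp add: c_def)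
    qed (use v in auto)
    thus False using v by simp
  qed
  define r where "r = vec n (\<lambda>i. - real_of_int (z (2+i) d))"
  have rc: "r \<in> carrier_vec n" by (simp add: r_def)
  define \<beta> where "\<beta> = (1 / det N) \<cdot>\<^sub>v (adj_mat N *\<^sub>v r)"
  have Nb: "N *\<^sub>v \<beta> = r" and bc: "\<beta> \<in> carrier_vec n" using adj_solve[OF Nc dN rc] by (auto simp: \<beta>_def)
  define a0 where "a0 = (\<lambda>j. if 1 \<le> j \<and> j \<le> n then \<beta> $ (j - 1) else if j = d then 1 else (0::real))"
  have ip_a: "ip d b (rv (z (2+i))) = (N *\<^sub>v vec n (\<lambda>j. b (Suc j))) $ i + b d * real_of_int (z (2+i) d)"
    if "i < n" for b i
  proof -
    have "ip d b (rv (z (2+i))) = ip n b (rv (z (2+i))) + b d * rv (z (2+i)) d"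
      using ip_last[of d] d3 by (simp add: n_def)
    moreover have "ip n b (rv (z (2+i))) = (N *\<^sub>v vec n (\<lambda>j. b (Suc j))) $ i"
      using that Nc by (auto simp: ip_shift scalar_prod_def N_def rv_def lessThan_atLeast0 mult.commute intro!: sum.cong)
    ultimately show ?thesis by (simp add: rv_def)
  qed
  have a0pid: "a0 \<in> pid d" by (auto simp: pid_def vsupp_def a0_def nd)
  have a0orth: "\<forall>i\<in>{2..2+d-2}. ip d a0 (rv (z i)) = 0"
  proof
    fix i assume i: "i \<in> {2..2+d-2}"
    define i' where "i' = i - 2"
    have ii: "i = 2 + i'" "i' < n" using i d3 by (auto simp: i'_def n_def)
    have "vec n (\<lambda>j. a0 (Suc j)) = \<beta>" using bc by (intro eq_vecI) (auto simp: a0_def)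
    hence "ip d a0 (rv (z i)) = r $ i' + real_of_int (z (2+i') d)"
      using ip_a[OF ii(2), of a0] Nb by (simp add: ii a0_def nd)
    thus "ip d a0 (rv (z i)) = 0" using ii by (simp add: r_def)
  qed
  have uniq: "b = a0" if b: "b \<in> pid d" "\<forall>i\<in>{2..2+d-2}. ip d b (rv (z i)) = 0" for b
  proof -
    define u where "u = vec n (\<lambda>j. b (Suc j) - a0 (Suc j))"
    have uc: "u \<in> carrier_vec n" by (simp add: u_def)
    have bd: "b d = 1" "a0 d = 1" using b a0pid by (auto simp: pid_def)
    have "N *\<^sub>v u = 0\<^sub>v n"
    proof (rule eq_vecI)
      fix i assume "i < dim_vec (0\<^sub>v n)"
      hence i: "i < n" by simp
      have "2 + i \<in> {2..2+d-2}" using i d3 by (auto simp: n_def)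
      hence "ip d b (rv (z (2+i))) = 0" "ip d a0 (rv (z (2+i))) = 0" using b a0orth by auto
      hence e: "(N *\<^sub>v vec n (\<lambda>j. b (Suc j))) $ i = (N *\<^sub>v vec n (\<lambda>j. a0 (Suc j))) $ i"
        using ip_a[OF i, of b] ip_a[OF i, of a0] bd by simp
      have "(N *\<^sub>v u) $ i = (N *\<^sub>v vec n (\<lambda>j. b (Suc j))) $ i - (N *\<^sub>v vec n (\<lambda>j. a0 (Suc j))) $ i"
        using i Nc by (auto simp: u_def scalar_prod_def right_diff_distrib sum_subtractf)
      thus "(N *\<^sub>v u) $ i = 0\<^sub>v n $ i" using e i by simp
    qed (use Nc in simp)
    hence u0: "u = 0\<^sub>v n" by (rule adj_kernel[OF Nc dN uc])
    show ?thesis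
    proof
      fix j
      show "b j = a0 j"
      proof (cases "1 \<le> j \<and> j \<le> n")
        case True
        hence "j - 1 < n" by linarith
        hence "u $ (j - 1) = 0" using u0 by simp
        thus ?thesis using True \<open>j - 1 < n\<close> by (simp add: u_def)
      next
        case False
        thus ?thesis using b(1) bd by (cases "j = d") (auto simp: pid_def vsupp_def a0_def nd)
      qed
    qed
  qed
  have alpha: "alphak d z 2 = a0"
    unfolding alphak_def
  proof (rule the_equality)
    show "a0 \<in> pid d \<and> (\<forall>i\<in>{2..2+d-2}. ip d a0 (rv (z i)) = 0)" using a0pid a0orth by blast
  next
    fix b assume "b \<in> pid d \<and> (\<forall>i\<in>{2..2+d-2}. ip d b (rv (z i)) = 0)"
    thus "b = a0" using uniq by blast
  qed
  define A where "A = mat d d (\<lambda>(i,j). real_of_int (z (Suc i) (Suc j)))"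
  have Ac: "A \<in> carrier_mat d d" by (simp add: A_def)
  define lam where "lam = Lf d a0 (z 1)"
  define x where "x = vec d (\<lambda>j. a0 (Suc j))"
  have xc: "x \<in> carrier_vec d" by (simp add: x_def)
  have Ax: "(A *\<^sub>v x) $ i = ip d a0 (rv (z (Suc i)))" if "i < d" for i
    using that by (auto simp: A_def x_def ip_shift scalar_prod_def rv_def lessThan_atLeast0 mult.commute intro!: sum.cong)
  have Ax0: "(A *\<^sub>v x) $ 0 = lam" using Ax[of 0] d3 by (simp add: lam_def Lf_def)
  have Axi: "(A *\<^sub>v x) $ i = 0" if "0 < i" "i < d" for i
  proof -
    have "Suc i \<in> {2..2+d-2}" using that d3 by auto
    thus ?thesis using Ax[OF that(2)] a0orth by auto
  qed
  define R where "R = replace_col A (A *\<^sub>v x) (d - 1)"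
  have Rc: "R \<in> carrier_mat d d" using Ac by (simp add: R_def replace_col_def)
  have "det R = x $ (d - 1) * det A" unfolding R_def by (rule cramer_lemma_mat[OF Ac xc]) (use d3 in simp)
  also have "x $ (d - 1) = 1" using d3 by (simp add: x_def a0_def nd)
  finally have dR: "det R = det A" by simp
  have "det R = (\<Sum>i<d. R $$ (i, d - 1) * cofactor R i (d - 1))"
    by (rule laplace_expansion_column[OF Rc]) (use d3 in simp)
  also have "\<dots> = (\<Sum>i<d. if i = 0 then lam * cofactor R 0 (d - 1) else 0)"
    using Ac Ax0 Axi by (intro sum.cong refl) (auto simp: R_def replace_col_def)
  also have "\<dots> = lam * cofactor R 0 (d - 1)" using d3 by simp
  also have "mat_delete R 0 (d - 1) = N"
    using Ac by (intro eq_matI) (auto simp: mat_delete_def R_def replace_col_def A_def N_def n_def)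
  hence "cofactor R 0 (d - 1) = (-1) ^ (d - 1) * det N" by (simp add: cofactor_def)
  finally have dA: "\<bar>det A\<bar> = \<bar>lam\<bar> * \<bar>det N\<bar>" using dR by (simp add: abs_mult)
  have "\<forall>k. \<exists>c. k < d \<longrightarrow> (\<lambda>j. if j = Suc k then 1 else 0) = (\<lambda>j. \<Sum>i=1..d. c i * z i j)"
  proof
    fix k
    show "\<exists>c. k < d \<longrightarrow> (\<lambda>j. if j = Suc k then 1 else 0) = (\<lambda>j. \<Sum>i=1..d. c i * z i j)"
    proof (cases "k < d")
      case True
      have "vsupp d (\<lambda>j. if j = Suc k then (1::int) else 0)" using True by (auto simp: vsupp_def)
      thus ?thesis using basis unfolding int_basis_def by blast
    qed auto
  qed
  then obtain cc where cc: "\<And>k. k < d \<Longrightarrow> (\<lambda>j. if j = Suc k then 1 else 0) = (\<lambda>j. \<Sum>i=1..d. cc k i * z i j)"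
    by metis
  define C where "C = mat d d (\<lambda>(k,i). real_of_int (cc k (Suc i)))"
  have Cc: "C \<in> carrier_mat d d" by (simp add: C_def)
  have CA: "C * A = 1\<^sub>m d"
  proof (rule eq_matI)
    fix k j assume kj: "k < dim_row (1\<^sub>m d)" "j < dim_col (1\<^sub>m d)"
    hence k: "k < d" and j: "j < d" by auto
    have "(C * A) $$ (k,j) = (\<Sum>i<d. real_of_int (cc k (Suc i)) * real_of_int (z (Suc i) (Suc j)))"
      using k j by (auto simp: C_def A_def scalar_prod_def lessThan_atLeast0 intro!: sum.cong)
    also have "\<dots> = real_of_int (\<Sum>i=1..d. cc k i * z i (Suc j))"
      by (simp add: sum.atLeast1_atMost_eq)
    also have "(\<Sum>i=1..d. cc k i * z i (Suc j)) = (if Suc j = Suc k then 1 else 0)"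
      using fun_cong[OF cc[OF k], of "Suc j"] by simp
    finally show "(C * A) $$ (k,j) = 1\<^sub>m d $$ (k,j)" using k j by auto
  qed (use Cc Ac in auto)
  have "det C * det A = 1" using det_mult[OF Cc Ac] CA by simp
  hence dA0: "det A \<noteq> 0" by auto
  have "A = map_mat real_of_int (mat d d (\<lambda>(i,j). z (Suc i) (Suc j)))"
    by (intro eq_matI) (auto simp: A_def)
  hence "det A = real_of_int (det (mat d d (\<lambda>(i,j). z (Suc i) (Suc j))))" by simp
  moreover define D where "D = det (mat d d (\<lambda>(i,j). z (Suc i) (Suc j)))"
  ultimately have DA: "det A = real_of_int D" by simp
  hence "D \<noteq> 0" using dA0 by auto
  hence "1 \<le> \<bar>D\<bar>" by linarith
  hence "\<bar>det A\<bar> \<ge> 1" using DA by (metis of_int_1_le_iff of_int_abs)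
  hence "1 \<le> \<bar>lam\<bar> * detUL d z 2 (d - 1)" using dA dUL by simp
  moreover have "0 < detUL d z 2 (d - 1)" using dUL dN by simp
  ultimately show ?thesis using alpha a0pid a0orth d3 unfolding lam_def
    by (auto simp: numeral_2_eq_2)
qed


lemma ip_lin2: "ip n x (\<lambda>j. a * y j + b * v j) = a * ip n x y + b * ip n x v"
  unfolding ip_def by (simp add: algebra_simps sum.distrib sum_distrib_left)

lemma ip_lin2l: "ip n (\<lambda>j. a * y j + b * v j) x = a * ip n y x + b * ip n v x"
  unfolding ip_def by (simp add: algebra_simps sum.distrib sum_distrib_left)

theorem lemma3:
  fixes d :: nat and z :: "nat \<Rightarrow> nat \<Rightarrow> int"
    and a :: "nat \<Rightarrow> real" and w :: "nat \<Rightarrow> int"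
  assumes "d \<ge> 3"
    and "int_basis d z"
    and "unorm d (z 1) \<le> unorm d (z 2)" and "unorm d (z 2) \<le> unorm d (z 3)"
    and "ip (d - 1) (rv (z 1)) (rv (z 2)) \<le> 0"
    and "\<forall>n\<in>{3..d-1}. detUL d z 1 n > unorm d (z 2) * detUL d z 1 (n - 1)"
    and "unorm d (z 1) \<noteq> 0"
    and "ul_indep d z 2"
    and "a \<in> Sk d z 2"
    and "Lf d a (z 2) * Lf d (alphak d z 2) (z 1) \<ge> 0"
    and "w \<in> Lam z 1 (d - 1)"
    and "unorm d w \<le> unorm d (z 2)"
    and "w \<noteq> (\<lambda>_. 0)" and "w \<noteq> z 2" and "w \<noteq> (\<lambda>j. - z 2 j)"
  shows "\<bar>Lf d a w\<bar> \<ge> \<bar>Lf d a (z 1)\<bar> \<and>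
         (\<not> (\<exists>m::int. w = (\<lambda>j. m * z 1 j)) \<longrightarrow>
         \<bar>Lf d a w\<bar> * unorm d w ^ (d - 1) \<ge>
           Dkl d z 1 2 ^ (d - 1) / (Dkl d z 2 (d - 1) * Bk d z 1 ^ (d - 1))
             * (1 - 1 / (2 * Bk d z 1 * Bk d z 2)))"
proof -
  note as = assms
  have d3: "d \<ge> 3" by (rule as(1))
  define al where "al = alphak d z 2"
  have AF: "al \<in> pid d" "\<forall>i\<in>{2..d}. ip d al (rv (z i)) = 0"
    "0 < detUL d z 2 (d - 1)" "1 \<le> \<bar>Lf d al (z 1)\<bar> * detUL d z 2 (d - 1)"
    using alpha_facts[OF d3 as(2) as(8)] unfolding al_def by auto
  define De where "De = detUL d z 2 (d - 1)"
  define u1 where "u1 = unorm d (z 1)"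
  define u2 where "u2 = unorm d (z 2)"
  define u3 where "u3 = unorm d (z 3)"
  define s where "s = ip (d - 1) (rv (z 1)) (rv (z 2))"
  have u1p: "0 < u1" using as(7) unorm_nonneg[of d "z 1"] unfolding u1_def by linarith
  obtain c where cw: "w = (\<lambda>j. \<Sum>i=1..<1 + (d - 1). c i * z i j)"
    using as(11) unfolding Lam_def by blast
  have cw': "w = (\<lambda>j. \<Sum>i=1..<d. c i * z i j)" using cw d3 by simp
  have c0: "\<forall>i\<in>{3..<d}. c i = 0" by (rule lattice_red[OF d3 as(6) cw' as(12)])
  define c1 where "c1 = c 1"
  define c2 where "c2 = c 2"
  have w2: "w = (\<lambda>j. c1 * z 1 j + c2 * z 2 j)"
  proof
    fix j
    have "{1..<d} = {1, 2} \<union> {3..<d}" using d3 by auto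
    hence "(\<Sum>i=1..<d. c i * z i j) = (\<Sum>i\<in>{1,2}. c i * z i j) + (\<Sum>i\<in>{3..<d}. c i * z i j)"
      by (simp add: sum.union_disjoint[symmetric])
    also have "(\<Sum>i\<in>{3..<d}. c i * z i j) = 0" using c0 by simp
    finally show "w j = c1 * z 1 j + c2 * z 2 j" using cw' by (simp add: c1_def c2_def)
  qed
  have rvw: "rv w = (\<lambda>j. real_of_int c1 * rv (z 1) j + real_of_int c2 * rv (z 2) j)"
    unfolding w2 rv_def by simp
  have Lfw: "Lf d b w = c1 * Lf d b (z 1) + c2 * Lf d b (z 2)" for b
    unfolding Lf_def rvw ip_lin2 ..
  define lam where "lam = Lf d al (z 1)"
  define e1 where "e1 = Lf d a (z 1) - Lf d al (z 1)"
  define e2 where "e2 = Lf d a (z 2) - Lf d al (z 2)"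
  have al2: "Lf d al (z 2) = 0" using AF(2) d3 unfolding Lf_def by auto
  have La1: "Lf d a (z 1) = lam + e1" by (simp add: lam_def e1_def)
  have La2: "Lf d a (z 2) = e2" using al2 by (simp add: e2_def)
  have Law: "Lf d a w = c1 * (lam + e1) + c2 * e2" using Lfw La1 La2 by simp
  have apid: "a \<in> pid d" and aS: "enorm d (\<lambda>i. a i - al i) \<le> Rk d z 2"
    using as(9) unfolding Sk_def al_def by auto
  have "\<bar>e1\<bar> \<le> enorm d (\<lambda>i. a i - al i) * u1"
    unfolding e1_def u1_def by (rule eps_bound[OF apid AF(1)]) (use d3 in simp)
  also have "\<dots> \<le> Rk d z 2 * u1" using aS u1p by (intro mult_right_mono) auto
  also have "Rk d z 2 * u1 = u1 / (2 * u3 * De)" by (simp add: Rk_def u3_def De_def)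
  finally have e1b: "\<bar>e1\<bar> \<le> u1 / (2 * u3 * De)" .
  have e2b: "0 \<le> e2 * lam" using as(10) La2 unfolding lam_def al_def by simp
  define nw where "nw = unorm d w"
  have ipw: "ip (d - 1) (rv w) (rv w) = (real_of_int c1)\<^sup>2 * u1\<^sup>2 + (real_of_int c2)\<^sup>2 * u2\<^sup>2 + 2 * real_of_int c1 * real_of_int c2 * s"
  proof -
    have "ip (d - 1) (rv w) (rv w) = c1 * (c1 * ip (d - 1) (rv (z 1)) (rv (z 1)) + c2 * ip (d - 1) (rv (z 1)) (rv (z 2)))
        + c2 * (c1 * ip (d - 1) (rv (z 2)) (rv (z 1)) + c2 * ip (d - 1) (rv (z 2)) (rv (z 2)))"
      unfolding rvw ip_lin2 ip_lin2l by (simp add: algebra_simps)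
    thus ?thesis unfolding u1_def u2_def s_def unorm_sq ip_sym[of "d - 1" "rv (z 2)" "rv (z 1)"]
      by (simp add: power2_eq_square algebra_simps)
  qed
  have nw: "nw\<^sup>2 = (real_of_int c1)\<^sup>2 * u1\<^sup>2 + (real_of_int c2)\<^sup>2 * u2\<^sup>2 + 2 * real_of_int c1 * real_of_int c2 * s"
    "0 \<le> nw" "nw \<le> u2"
    using ipw unorm_sq[of d w] unorm_nonneg[of d w] as(12) by (auto simp: nw_def u2_def)
  have cc: "\<not> (c1 = 0 \<and> c2 = 0)" "\<not> (c1 = 0 \<and> c2 = 1)" "\<not> (c1 = 0 \<and> c2 = -1)"
    using as(13,14,15) w2 by auto
  define G where "G = u1\<^sup>2 * u2\<^sup>2 - s\<^sup>2"
  have dUL12: "detUL d z 1 2 = sqrt G"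
  proof -
    have "detUL d z 1 2 = sqrt (ip (d - 1) (rv (z 1)) (rv (z 1)) * ip (d - 1) (rv (z 2)) (rv (z 2))
       - ip (d - 1) (rv (z 1)) (rv (z 2)) * ip (d - 1) (rv (z 2)) (rv (z 1)))"
      unfolding detUL_def det2 by (simp add: numeral_2_eq_2)
    thus ?thesis unfolding G_def u1_def u2_def s_def unorm_sq ip_sym[of "d - 1" "rv (z 2)" "rv (z 1)"]
      by (simp add: power2_eq_square)
  qed
  have G0: "0 \<le> G"
  proof -
    have "0 \<le> det (gram (d - 1) (\<lambda>i. rv (z (1 + i))) 2)" by (rule gram_nonneg)
    hence "0 \<le> ip (d - 1) (rv (z 1)) (rv (z 1)) * ip (d - 1) (rv (z 2)) (rv (z 2))
       - ip (d - 1) (rv (z 1)) (rv (z 2)) * ip (d - 1) (rv (z 2)) (rv (z 1))"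
      unfolding gram_def det2 by (simp add: numeral_2_eq_2)
    thus ?thesis unfolding G_def u1_def u2_def s_def unorm_sq ip_sym[of "d - 1" "rv (z 2)" "rv (z 1)"]
      by (simp add: power2_eq_square)
  qed
  have core: "\<bar>c1 * (lam + e1) + c2 * e2\<bar> \<ge> \<bar>lam + e1\<bar> \<and>
    (c2 \<noteq> 0 \<longrightarrow> \<bar>c1 * (lam + e1) + c2 * e2\<bar> * nw ^ (d - 1) \<ge>
      (sqrt G / u1\<^sup>2) ^ (d - 1) / ((De / u2 ^ (d - 1)) * (u2 / u1) ^ (d - 1)) * (1 - 1 / (2 * (u2 / u1) * (u3 / u2))))"
    by (rule arith_core[OF u1p as(3)[folded u1_def u2_def] as(4)[folded u2_def u3_def]
        as(5)[folded s_def] AF(3)[folded De_def] AF(4)[folded lam_def De_def] e1b e2b nw cc G_def G0])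
  have c2nz: "c2 \<noteq> 0" if "\<not> (\<exists>m::int. w = (\<lambda>j. m * z 1 j))"
  proof
    assume "c2 = 0"
    hence "w = (\<lambda>j. c1 * z 1 j)" using w2 by simp
    thus False using that by blast
  qed
  have RHS: "Dkl d z 1 2 ^ (d - 1) / (Dkl d z 2 (d - 1) * Bk d z 1 ^ (d - 1)) * (1 - 1 / (2 * Bk d z 1 * Bk d z 2))
     = (sqrt G / u1\<^sup>2) ^ (d - 1) / ((De / u2 ^ (d - 1)) * (u2 / u1) ^ (d - 1)) * (1 - 1 / (2 * (u2 / u1) * (u3 / u2)))"
  proof -
    have n12: "(1::nat) + 1 = 2" "(2::nat) + 1 = 3" by simp_all
    have "Bk d z 1 = u2 / u1" "Bk d z 2 = u3 / u2" unfolding Bk_def u1_def u2_def u3_def n12 by simp_all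
    moreover have "Dkl d z 1 2 = sqrt G / u1\<^sup>2" "Dkl d z 2 (d - 1) = De / u2 ^ (d - 1)"
      unfolding Dkl_def dUL12 De_def u1_def u2_def by simp_all
    ultimately show ?thesis by simp
  qed
  show ?thesis unfolding RHS Law La1 nw_def[symmetric] using core c2nz by blast
qed

end
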